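(* Consider the Coxeter diagram $D$ with seven nodes $1,\dots,7$ forming the cycle $6-5-4-3-2-1-7-6$, with edge labels $m_{65}=4$, $m_{54}=4$, $m_{43}=6$, $m_{32}=4$, $m_{21}=\infty$, $m_{17}=4$, $m_{76}=6$, and all other pairs of nodes non-adjacent (i.e. $m_{ij}=2$). Then $D$ is the Coxeter diagram of a finite-volume hyperbolic Coxeter $4$-polytope $P_0$ which (a) has exactly one ideal vertex, and (b) has the property that whenever a bounded facet and an unbounded facet intersect, their dihedral angle is $\pi/(2k)$ for some $k\in\mathbb{N}$. Moreover, the horospherical link of the unique ideal vertex of $P_0$ is a Euclidean right prism over a triangle with inner angles $\pi/2,\pi/4,\pi/4$, and its Coxeter diagram is the subdiagram of $D$ spanned by the nodes $1,2,4,5,6$.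
   Context: A hyperbolic Coxeter polytope is a finite convex polytope in $\mathbb{H}^n$ all of whose dihedral angles are integral submultiples of $\pi$. Its Coxeter diagram has one node per bounding hyperplane; nodes $i,j$ are joined by an edge labelled $m_{ij}$ if the hyperplanes meet at dihedral angle $\pi/m_{ij}$, with label $\infty$ if they are tangent at infinity, no edge if $m_{ij}=2$, and a dashed edge if they are ultraparallel (there are no dashed edges in $D$). *)

theory Defs
  imports "HOL-Analysis.Analysis"
begin

type_synonym lor = "(real^4) \<times> real"

definition lorentz :: "lor \<Rightarrow> lor \<Rightarrow> real" where
  "lorentz x y = fst x \<bullet> fst y - snd x * snd y"

definition hyp :: "lor set" where
  "hyp = {x. lorentz x x = -1 \<and> snd x > 0}"

definition hyp_dist :: "lor \<Rightarrow> lor \<Rightarrow> real" where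
  "hyp_dist x y = arcosh (- lorentz x y)"

definition hyp_bounded :: "lor set \<Rightarrow> bool" where
  "hyp_bounded A \<longleftrightarrow> (\<exists>x0\<in>hyp. \<exists>r. \<forall>y\<in>A. hyp_dist x0 y \<le> r)"

text \<open>Hyperbolic volume, computed in the Klein (projective) model, whose
  volume element is dy / (1 - |y|^2)^((n+1)/2) with n = 4.\<close>
definition klein :: "lor \<Rightarrow> real^4" where
  "klein x = fst x /\<^sub>R snd x"

definition hyp_volume :: "lor set \<Rightarrow> ennreal" where
  "hyp_volume A =
     (\<integral>\<^sup>+ y \<in> klein ` (A \<inter> hyp). ennreal ((1 - (norm y)\<^sup>2) powr (-5/2)) \<partial>lborel)"

definition polytope :: "nat set \<Rightarrow> (nat \<Rightarrow> lor) \<Rightarrow> lor set" where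
  "polytope I e = {x \<in> hyp. \<forall>i\<in>I. lorentz x (e i) \<le> 0}"

definition facet :: "nat set \<Rightarrow> (nat \<Rightarrow> lor) \<Rightarrow> nat \<Rightarrow> lor set" where
  "facet I e i = {x \<in> polytope I e. lorentz x (e i) = 0}"

definition dihedral :: "lor \<Rightarrow> lor \<Rightarrow> real" where
  "dihedral u w = arccos (- lorentz u w)"

text \<open>Coxeter labels: Some m means label m (m = 2: no edge), None means \<infinity>.
  Gram entry: -cos(pi/m), resp. -1 (hyperplanes tangent at infinity).\<close>
definition gram_entry :: "nat option \<Rightarrow> real" where
  "gram_entry m = (case m of None \<Rightarrow> -1 | Some k \<Rightarrow> - cos (pi / real k))"

text \<open>A (convex, finite-sided) polytope in H^4 whose bounding hyperplanes are indexed
  by the nodes I, with outward unit normals e i: nonempty interior, every hyperplane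
  contributes a facet (irredundance), and the Gram matrix of the normals is the one
  of the Coxeter diagram with labels m (so the dihedral angles are pi/m_ij, and
  label \<infinity> means tangent at infinity).\<close>
definition coxeter_polytope_with_diagram ::
    "nat set \<Rightarrow> (nat \<Rightarrow> nat \<Rightarrow> nat option) \<Rightarrow> (nat \<Rightarrow> lor) \<Rightarrow> bool" where
  "coxeter_polytope_with_diagram I m e \<longleftrightarrow>
     finite I \<and>
     (\<forall>i\<in>I. lorentz (e i) (e i) = 1) \<and>
     (\<forall>i\<in>I. \<forall>j\<in>I. i \<noteq> j \<longrightarrow> lorentz (e i) (e j) = gram_entry (m i j)) \<and>
     (\<exists>x\<in>hyp. \<forall>i\<in>I. lorentz x (e i) < 0) \<and>
     (\<forall>i\<in>I. \<exists>x\<in>hyp. lorentz x (e i) > 0 \<and> (\<forall>j\<in>I - {i}. lorentz x (e j) < 0))"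

text \<open>Ideal vertex: a light-like future point (normalised to time coordinate 1) in the
  closure of the polytope at infinity which is a vertex, i.e. the normals of the
  facets through it cut out exactly the line through it.\<close>
definition ideal_vertex :: "nat set \<Rightarrow> (nat \<Rightarrow> lor) \<Rightarrow> lor \<Rightarrow> bool" where
  "ideal_vertex I e v \<longleftrightarrow>
     lorentz v v = 0 \<and> snd v = 1 \<and> (\<forall>i\<in>I. lorentz v (e i) \<le> 0) \<and>
     (\<forall>w. (\<forall>i\<in>I. lorentz v (e i) = 0 \<longrightarrow> lorentz w (e i) = 0) \<longrightarrow> (\<exists>c. w = c *\<^sub>R v))"

text \<open>Horosphere centred at the ideal point v; small c means deep in the cusp.
  Its intrinsic (flat) metric is given by the Lorentzian chord length.\<close>
definition horosphere :: "lor \<Rightarrow> real \<Rightarrow> lor set" where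
  "horosphere v c = {x \<in> hyp. lorentz x v = - c}"

text \<open>Right prism of height h over the right isosceles triangle with legs a
  (the Euclidean triangle with angles pi/2, pi/4, pi/4).\<close>
definition tri_prism :: "real \<Rightarrow> real \<Rightarrow> (real \<times> real \<times> real) set" where
  "tri_prism a h = {(x, y, z). 0 \<le> x \<and> 0 \<le> y \<and> x + y \<le> a \<and> 0 \<le> z \<and> z \<le> h}"

definition is_right_prism_link :: "lor set \<Rightarrow> lor set \<Rightarrow> bool" where
  "is_right_prism_link S A \<longleftrightarrow>
     (\<exists>\<phi> :: real \<times> real \<times> real \<Rightarrow> lor. \<exists>a h. a > 0 \<and> h > 0 \<and>
        \<phi> ` UNIV = S \<and>
        (\<forall>p q. lorentz (\<phi> p - \<phi> q) (\<phi> p - \<phi> q) = (dist p q)\<^sup>2) \<and>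
        \<phi> ` tri_prism a h = A)"

definition D_m :: "nat \<Rightarrow> nat \<Rightarrow> nat option" where
  "D_m i j =
     (if {i, j} = {6, 5} \<or> {i, j} = {5, 4} \<or> {i, j} = {3, 2} \<or> {i, j} = {1, 7} then Some 4
      else if {i, j} = {4, 3} \<or> {i, j} = {7, 6} then Some 6
      else if {i, j} = {2, 1} then None
      else Some 2)"

end

theory Submission
  imports Defs
begin

definition V4 :: "real \<Rightarrow> real \<Rightarrow> real \<Rightarrow> real \<Rightarrow> real \<Rightarrow> lor" where
  "V4 a b c d t = ((\<chi> i. if i = 1 then a else if i = 2 then b else if i = 3 then c else d), t)"

lemma V4_comp [simp]:
  "fst (V4 a b c d t) $ 1 = a" "fst (V4 a b c d t) $ 2 = b"
  "fst (V4 a b c d t) $ 3 = c" "fst (V4 a b c d t) $ 4 = d" "snd (V4 a b c d t) = t"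
  by (simp_all add: V4_def)

lemma lorentz_expand:
  "lorentz x y = fst x $ 1 * fst y $ 1 + fst x $ 2 * fst y $ 2 + fst x $ 3 * fst y $ 3
     + fst x $ 4 * fst y $ 4 - snd x * snd y"
  by (simp add: lorentz_def inner_vec_def sum_4)

lemma lor_eq_iff:
  "(x::lor) = y \<longleftrightarrow> fst x $ 1 = fst y $ 1 \<and> fst x $ 2 = fst y $ 2 \<and> fst x $ 3 = fst y $ 3
     \<and> fst x $ 4 = fst y $ 4 \<and> snd x = snd y"
  by (auto simp: prod_eq_iff vec_eq_iff forall_4)

lemma V4_eq: "(x::lor) = V4 (fst x $ 1) (fst x $ 2) (fst x $ 3) (fst x $ 4) (snd x)"
  by (simp add: lor_eq_iff)

lemma "gram_entry (Some 4) = - sqrt 2 / 2" "gram_entry (Some 6) = - sqrt 3 / 2" "gram_entry (Some 2) = 0" "gram_entry None = -1"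
  by (simp_all add: gram_entry_def cos_45 cos_30)

lemma "D_m 3 2 = Some 4" "D_m 1 3 = Some 2" "D_m 2 1 = None"
  by (simp_all add: D_m_def doubleton_eq_iff)

definition E :: "nat \<Rightarrow> lor" where
  "E i = (if i = 1 then V4 0 0 (-1) 0 0
     else if i = 2 then V4 0 0 1 (sqrt 2) (sqrt 2)
     else if i = 3 then V4 (sqrt 3 / 2) 0 0 (-1/2) 0
     else if i = 4 then V4 (-1) 0 0 0 0
     else if i = 5 then V4 (sqrt 2 / 2) (sqrt 2 / 2) 0 (sqrt 2 * sqrt 3 / 2) (sqrt 2 * sqrt 3 / 2)
     else if i = 6 then V4 0 (-1) 0 0 0
     else V4 0 (sqrt 3 / 2) (sqrt 2 / 2) 0 (1/2))"

lemma E_simps: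
  "E 1 = V4 0 0 (-1) 0 0" "E 2 = V4 0 0 1 (sqrt 2) (sqrt 2)" "E 3 = V4 (sqrt 3 / 2) 0 0 (-1/2) 0"
  "E 4 = V4 (-1) 0 0 0 0" "E 5 = V4 (sqrt 2 / 2) (sqrt 2 / 2) 0 (sqrt 2 * sqrt 3 / 2) (sqrt 2 * sqrt 3 / 2)"
  "E 6 = V4 0 (-1) 0 0 0" "E 7 = V4 0 (sqrt 3 / 2) (sqrt 2 / 2) 0 (1/2)"
  "E (Suc 0) = V4 0 0 (-1) 0 0"
  by (simp_all add: E_def)

lemma mem17: "(i::nat) \<in> {1..7} \<longleftrightarrow> i = 1 \<or> i = 2 \<or> i = 3 \<or> i = 4 \<or> i = 5 \<or> i = 6 \<or> i = 7"
  by auto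

lemma gram_vals: "gram_entry (Some 4) = - sqrt 2 / 2" "gram_entry (Some 6) = - sqrt 3 / 2"
  "gram_entry (Some 2) = 0" "gram_entry None = -1"
  by (simp_all add: gram_entry_def cos_45 cos_30)

lemma lorentz_V4: "lorentz (V4 a b c d t) (V4 a' b' c' d' t') = a*a' + b*b' + c*c' + d*d' - t*t'"
  by (simp add: lorentz_expand)

lemma s2sq [simp]: "sqrt 2 * sqrt 2 = (2::real)" by simp
lemma s3sq [simp]: "sqrt 3 * sqrt 3 = (3::real)" by simp

lemma E_norm: "i \<in> {1..7} \<Longrightarrow> lorentz (E i) (E i) = 1"
  unfolding mem17 by (elim disjE) (simp_all add: E_simps lorentz_V4 field_simps)

lemma g12: "lorentz (E 1) (E 2) = gram_entry (D_m 1 2)"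
  by (simp add: E_simps lorentz_V4 D_m_def doubleton_eq_iff gram_vals field_simps)
lemma g13: "lorentz (E 1) (E 3) = gram_entry (D_m 1 3)"
  by (simp add: E_simps lorentz_V4 D_m_def doubleton_eq_iff gram_vals field_simps)
lemma g14: "lorentz (E 1) (E 4) = gram_entry (D_m 1 4)"
  by (simp add: E_simps lorentz_V4 D_m_def doubleton_eq_iff gram_vals field_simps)
lemma g15: "lorentz (E 1) (E 5) = gram_entry (D_m 1 5)"
  by (simp add: E_simps lorentz_V4 D_m_def doubleton_eq_iff gram_vals field_simps)
lemma g16: "lorentz (E 1) (E 6) = gram_entry (D_m 1 6)"
  by (simp add: E_simps lorentz_V4 D_m_def doubleton_eq_iff gram_vals field_simps)
lemma g17: "lorentz (E 1) (E 7) = gram_entry (D_m 1 7)"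
  by (simp add: E_simps lorentz_V4 D_m_def doubleton_eq_iff gram_vals field_simps)
lemma g21: "lorentz (E 2) (E 1) = gram_entry (D_m 2 1)"
  by (simp add: E_simps lorentz_V4 D_m_def doubleton_eq_iff gram_vals field_simps)
lemma g23: "lorentz (E 2) (E 3) = gram_entry (D_m 2 3)"
  by (simp add: E_simps lorentz_V4 D_m_def doubleton_eq_iff gram_vals field_simps)
lemma g24: "lorentz (E 2) (E 4) = gram_entry (D_m 2 4)"
  by (simp add: E_simps lorentz_V4 D_m_def doubleton_eq_iff gram_vals field_simps)
lemma g25: "lorentz (E 2) (E 5) = gram_entry (D_m 2 5)"
  by (simp add: E_simps lorentz_V4 D_m_def doubleton_eq_iff gram_vals field_simps)
lemma g26: "lorentz (E 2) (E 6) = gram_entry (D_m 2 6)"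
  by (simp add: E_simps lorentz_V4 D_m_def doubleton_eq_iff gram_vals field_simps)
lemma g27: "lorentz (E 2) (E 7) = gram_entry (D_m 2 7)"
  by (simp add: E_simps lorentz_V4 D_m_def doubleton_eq_iff gram_vals field_simps)
lemma g31: "lorentz (E 3) (E 1) = gram_entry (D_m 3 1)"
  by (simp add: E_simps lorentz_V4 D_m_def doubleton_eq_iff gram_vals field_simps)
lemma g32: "lorentz (E 3) (E 2) = gram_entry (D_m 3 2)"
  by (simp add: E_simps lorentz_V4 D_m_def doubleton_eq_iff gram_vals field_simps)
lemma g34: "lorentz (E 3) (E 4) = gram_entry (D_m 3 4)"
  by (simp add: E_simps lorentz_V4 D_m_def doubleton_eq_iff gram_vals field_simps)
lemma g35: "lorentz (E 3) (E 5) = gram_entry (D_m 3 5)"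
  by (simp add: E_simps lorentz_V4 D_m_def doubleton_eq_iff gram_vals field_simps)
lemma g36: "lorentz (E 3) (E 6) = gram_entry (D_m 3 6)"
  by (simp add: E_simps lorentz_V4 D_m_def doubleton_eq_iff gram_vals field_simps)
lemma g37: "lorentz (E 3) (E 7) = gram_entry (D_m 3 7)"
  by (simp add: E_simps lorentz_V4 D_m_def doubleton_eq_iff gram_vals field_simps)
lemma g41: "lorentz (E 4) (E 1) = gram_entry (D_m 4 1)"
  by (simp add: E_simps lorentz_V4 D_m_def doubleton_eq_iff gram_vals field_simps)
lemma g42: "lorentz (E 4) (E 2) = gram_entry (D_m 4 2)"
  by (simp add: E_simps lorentz_V4 D_m_def doubleton_eq_iff gram_vals field_simps)
lemma g43: "lorentz (E 4) (E 3) = gram_entry (D_m 4 3)"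
  by (simp add: E_simps lorentz_V4 D_m_def doubleton_eq_iff gram_vals field_simps)
lemma g45: "lorentz (E 4) (E 5) = gram_entry (D_m 4 5)"
  by (simp add: E_simps lorentz_V4 D_m_def doubleton_eq_iff gram_vals field_simps)
lemma g46: "lorentz (E 4) (E 6) = gram_entry (D_m 4 6)"
  by (simp add: E_simps lorentz_V4 D_m_def doubleton_eq_iff gram_vals field_simps)
lemma g47: "lorentz (E 4) (E 7) = gram_entry (D_m 4 7)"
  by (simp add: E_simps lorentz_V4 D_m_def doubleton_eq_iff gram_vals field_simps)
lemma g51: "lorentz (E 5) (E 1) = gram_entry (D_m 5 1)"
  by (simp add: E_simps lorentz_V4 D_m_def doubleton_eq_iff gram_vals field_simps)
lemma g52: "lorentz (E 5) (E 2) = gram_entry (D_m 5 2)"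
  by (simp add: E_simps lorentz_V4 D_m_def doubleton_eq_iff gram_vals field_simps)
lemma g53: "lorentz (E 5) (E 3) = gram_entry (D_m 5 3)"
  by (simp add: E_simps lorentz_V4 D_m_def doubleton_eq_iff gram_vals field_simps)
lemma g54: "lorentz (E 5) (E 4) = gram_entry (D_m 5 4)"
  by (simp add: E_simps lorentz_V4 D_m_def doubleton_eq_iff gram_vals field_simps)
lemma g56: "lorentz (E 5) (E 6) = gram_entry (D_m 5 6)"
  by (simp add: E_simps lorentz_V4 D_m_def doubleton_eq_iff gram_vals field_simps)
lemma g57: "lorentz (E 5) (E 7) = gram_entry (D_m 5 7)"
  by (simp add: E_simps lorentz_V4 D_m_def doubleton_eq_iff gram_vals field_simps)
lemma g61: "lorentz (E 6) (E 1) = gram_entry (D_m 6 1)"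
  by (simp add: E_simps lorentz_V4 D_m_def doubleton_eq_iff gram_vals field_simps)
lemma g62: "lorentz (E 6) (E 2) = gram_entry (D_m 6 2)"
  by (simp add: E_simps lorentz_V4 D_m_def doubleton_eq_iff gram_vals field_simps)
lemma g63: "lorentz (E 6) (E 3) = gram_entry (D_m 6 3)"
  by (simp add: E_simps lorentz_V4 D_m_def doubleton_eq_iff gram_vals field_simps)
lemma g64: "lorentz (E 6) (E 4) = gram_entry (D_m 6 4)"
  by (simp add: E_simps lorentz_V4 D_m_def doubleton_eq_iff gram_vals field_simps)
lemma g65: "lorentz (E 6) (E 5) = gram_entry (D_m 6 5)"
  by (simp add: E_simps lorentz_V4 D_m_def doubleton_eq_iff gram_vals field_simps)
lemma g67: "lorentz (E 6) (E 7) = gram_entry (D_m 6 7)"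
  by (simp add: E_simps lorentz_V4 D_m_def doubleton_eq_iff gram_vals field_simps)
lemma g71: "lorentz (E 7) (E 1) = gram_entry (D_m 7 1)"
  by (simp add: E_simps lorentz_V4 D_m_def doubleton_eq_iff gram_vals field_simps)
lemma g72: "lorentz (E 7) (E 2) = gram_entry (D_m 7 2)"
  by (simp add: E_simps lorentz_V4 D_m_def doubleton_eq_iff gram_vals field_simps)
lemma g73: "lorentz (E 7) (E 3) = gram_entry (D_m 7 3)"
  by (simp add: E_simps lorentz_V4 D_m_def doubleton_eq_iff gram_vals field_simps)
lemma g74: "lorentz (E 7) (E 4) = gram_entry (D_m 7 4)"
  by (simp add: E_simps lorentz_V4 D_m_def doubleton_eq_iff gram_vals field_simps)
lemma g75: "lorentz (E 7) (E 5) = gram_entry (D_m 7 5)"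
  by (simp add: E_simps lorentz_V4 D_m_def doubleton_eq_iff gram_vals field_simps)
lemma g76: "lorentz (E 7) (E 6) = gram_entry (D_m 7 6)"
  by (simp add: E_simps lorentz_V4 D_m_def doubleton_eq_iff gram_vals field_simps)

lemma E_gram: "i \<in> {1..7} \<Longrightarrow> j \<in> {1..7} \<Longrightarrow> i \<noteq> j \<Longrightarrow> lorentz (E i) (E j) = gram_entry (D_m i j)"
  unfolding mem17 by (elim disjE; hypsubst; simp only: g12 g13 g14 g15 g16 g17 g21 g23 g24 g25 g26 g27 g31 g32 g34 g35 g36 g37 g41 g42 g43 g45 g46 g47 g51 g52 g53 g54 g56 g57 g61 g62 g63 g64 g65 g67 g71 g72 g73 g74 g75 g76)

lemma key_cert:
  fixes z1 z2 z3 d t :: real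
  assumes "0 \<le> z1" "0 \<le> z2" "0 \<le> z3" "z3 \<le> 2*d" "z1 + z2 \<le> 3*d" "z1 \<le> t - d" "z2 + z3 \<le> t"
  shows "d*t/10 \<le> 2*d*t - d^2 - z1^2/3 - z2^2/3 - z3^2/2"
proof -
  have id: "2*d*t - d^2 - z1^2/3 - z2^2/3 - z3^2/2 - d*t/10 = (11/30)*(z1*z2) + (1/5)*(z1*(2*d-z3)) + (7/30)*(z1*(3*d-z1-z2)) + (3/20)*(z1*(t-d-z1)) + (3/20)*(z2*z3) + (17/60)*(z2*(3*d-z1-z2)) + (3/20)*(z2*(t-z2-z3)) + (2/5)*(z3*(2*d-z3)) + (13/40)*(z3*(t-d-z1)) + (2/5)*(z3*(t-z2-z3)) + (17/40)*((2*d-z3)*(t-d-z1)) + (3/10)*((2*d-z3)*(t-z2-z3)) + (1/20)*((3*d-z1-z2)*(t-d-z1)) + (1/10)*((3*d-z1-z2)*(t-z2-z3))"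
    by (simp add: field_simps power2_eq_square)
  have "0 \<le> (11/30)*(z1*z2) + (1/5)*(z1*(2*d-z3)) + (7/30)*(z1*(3*d-z1-z2)) + (3/20)*(z1*(t-d-z1)) + (3/20)*(z2*z3) + (17/60)*(z2*(3*d-z1-z2)) + (3/20)*(z2*(t-z2-z3)) + (2/5)*(z3*(2*d-z3)) + (13/40)*(z3*(t-d-z1)) + (2/5)*(z3*(t-z2-z3)) + (17/40)*((2*d-z3)*(t-d-z1)) + (3/10)*((2*d-z3)*(t-z2-z3)) + (1/20)*((3*d-z1-z2)*(t-d-z1)) + (1/10)*((3*d-z1-z2)*(t-z2-z3))"
    using assms by (intro add_nonneg_nonneg mult_nonneg_nonneg) auto
  then show ?thesis using id by linarith
qed


lemma prod_4: "prod f (UNIV::4 set) = f 1 * f 2 * f 3 * f 4"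
  unfolding UNIV_4 by (simp add: ac_simps)

definition Bx :: "nat \<Rightarrow> (real^4) set" where
  "Bx k = cbox (fst (V4 0 0 0 (1 - (1/4)^k) 0)) (fst (V4 (2*(1/4)^k) (2*(1/4)^k) (2*(1/4)^k) 1 0))"

lemma mem_Bx: "y \<in> Bx k \<longleftrightarrow> 0 \<le> y$1 \<and> y$1 \<le> 2*(1/4)^k \<and> 0 \<le> y$2 \<and> y$2 \<le> 2*(1/4)^k
   \<and> 0 \<le> y$3 \<and> y$3 \<le> 2*(1/4)^k \<and> 1 - (1/4)^k \<le> y$4 \<and> y$4 \<le> 1"
  by (simp add: Bx_def mem_box_cart forall_4)

lemma emeasure_Bx: "emeasure lborel (Bx k) = ennreal (8 * (1/8)^k * (1/32)^k)"
proof -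
  have ne: "Bx k \<noteq> {}"
  proof -
    have "fst (V4 0 0 0 1 0) \<in> Bx k" by (simp add: mem_Bx)
    then show ?thesis by auto
  qed
  have "emeasure lborel (Bx k) = ennreal (measure lborel (Bx k))"
    unfolding Bx_def by (rule emeasure_eq_ennreal_measure) (simp add: emeasure_lborel_cbox_eq)
  also have "measure lborel (Bx k) = 2*(1/4)^k * (2*(1/4)^k) * (2*(1/4)^k) * (1 - (1 - (1/4)^k))"
    using ne unfolding Bx_def by (subst content_cbox_cart) (assumption, simp only: prod_4 V4_comp, simp)
  also have "\<dots> = 8 * (1/8)^k * (1/32)^k"
  proof -
    have a: "((1::real)/4)^k * (1/4)^k * (1/4)^k * (1/4)^k = (1/256)^k"
      by (simp add: power_mult_distrib[symmetric])
    have b: "((1::real)/8)^k * (1/32)^k = (1/256)^k"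
      by (simp add: power_mult_distrib[symmetric])
    show ?thesis using a b by (simp add: algebra_simps)
  qed
  finally show ?thesis .
qed

lemma summable_geom_C: "summable (\<lambda>k::nat. C * (1/8::real)^k)"
  by (intro summable_mult summable_geometric) simp

lemma finite_vol_crit:
  fixes S :: "(real^4) set" and F :: "real^4 \<Rightarrow> real"
  assumes "\<And>y. y \<in> S \<Longrightarrow> \<exists>k. y \<in> Bx k \<and> F y \<le> 32^(k+3)"
  shows "(\<integral>\<^sup>+ y \<in> S. ennreal (F y) \<partial>lborel) < \<infinity>"
proof -
  have pw: "ennreal (F y) * indicator S y \<le> (\<Sum>k. ennreal (32^(k+3)) * indicator (Bx k) y)" for y
  proof (cases "y \<in> S")
    case True
    then obtain k where k: "y \<in> Bx k" "F y \<le> 32^(k+3)" using assms by blast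
    have "ennreal (F y) * indicator S y \<le> ennreal (32^(k+3)) * indicator (Bx k) y"
      using True k by (simp add: ennreal_leI)
    also have "\<dots> \<le> (\<Sum>k. ennreal (32^(k+3)) * indicator (Bx k) y)"
    proof -
      define f where "f = (\<lambda>i. ennreal (32^(i+3)) * indicator (Bx i) y)"
      have "sum f {k} \<le> suminf f"
        by (rule sum_le_suminf) (auto intro: summableI)
      moreover have "sum f {k} = f k" by simp
      ultimately show ?thesis unfolding f_def by simp
    qed
    finally show ?thesis .
  qed simp
  have "(\<integral>\<^sup>+ y \<in> S. ennreal (F y) \<partial>lborel) \<le> (\<integral>\<^sup>+ y. (\<Sum>k. ennreal (32^(k+3)) * indicator (Bx k) y) \<partial>lborel)"
    by (intro nn_integral_mono pw)
  also have "\<dots> = (\<Sum>k. \<integral>\<^sup>+ y. ennreal (32^(k+3)) * indicator (Bx k) y \<partial>lborel)"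
    by (rule nn_integral_suminf) (simp add: Bx_def)
  also have "\<dots> = (\<Sum>k. ennreal (32^(k+3)) * emeasure lborel (Bx k))"
    by (subst nn_integral_cmult_indicator) (simp_all add: Bx_def)
  also have "\<dots> = (\<Sum>k. ennreal (8 * 32^3 * (1/8)^k))"
  proof (rule suminf_cong)
    fix k :: nat
    have "(32::real)^(k+3) * (8 * (1/8)^k * (1/32)^k) = 8 * 32^3 * (1/8)^k"
      by (simp add: power_add power_mult_distrib[symmetric])
    then show "ennreal (32^(k+3)) * emeasure lborel (Bx k) = ennreal (8 * 32^3 * (1/8)^k)"
      by (simp add: emeasure_Bx ennreal_mult[symmetric])
  qed
  also have "\<dots> = ennreal (\<Sum>k. 8 * 32^3 * (1/8)^k)"
    by (rule suminf_ennreal2) (simp_all add: summable_geom_C)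
  also have "\<dots> < \<infinity>" by simp
  finally show ?thesis .
qed


lemma quarter_powr: "((1::real)/4) powr (-5/2) = 32"
proof -
  have "((1::real)/4) powr (5/2) = (1/4) powr (2 + 1/2)" by simp
  also have "\<dots> = (1/4) powr 2 * (1/4) powr (1/2)"
    by (rule powr_add)
  also have "(1/4) powr (2::real) = ((1::real)/4)^2"
    by (rule powr_numeral) simp
  also have "(1/4) powr (1/2) = sqrt ((1::real)/4)"
    by (simp add: powr_half_sqrt)
  also have "sqrt ((1::real)/4) = 1/2"
    using real_sqrt_abs[of "1/2"] by (simp add: power2_eq_square)
  finally have "((1::real)/4) powr (5/2) = 1/32" by (simp add: power2_eq_square)
  then show ?thesis by (simp add: powr_minus_divide divide_simps)
qed

lemma pow4_powr: "(((1::real)/4)^n) powr (-5/2) = 32^n"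
proof -
  have "(((1::real)/4)^n) powr (-5/2) = ((1/4) powr (real n)) powr (-5/2)"
    by (simp add: powr_realpow)
  also have "\<dots> = ((1/4) powr (-5/2)) powr (real n)"
    by (simp only: powr_powr mult.commute)
  also have "\<dots> = 32^n" by (simp only: quarter_powr) (simp add: powr_realpow)
  finally show ?thesis .
qed

lemma choose_k:
  fixes \<delta> :: real
  assumes "0 < \<delta>" "\<delta> \<le> 1"
  shows "\<exists>k. (1/4)^(k+1) < \<delta> \<and> \<delta> \<le> (1/4)^k"
proof -
  obtain n where n: "((1::real)/4)^n < \<delta>" using real_arch_pow_inv[of \<delta> "1/4"] assms by auto
  define k0 where "k0 = (LEAST n. ((1::real)/4)^n < \<delta>)"
  have k0: "((1::real)/4)^k0 < \<delta>" unfolding k0_def by (rule LeastI[of _ n]) (rule n)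
  have "k0 \<noteq> 0"
  proof
    assume "k0 = 0" then show False using k0 assms by simp
  qed
  then obtain k where kk: "k0 = Suc k" by (cases k0) auto
  have "\<not> ((1::real)/4)^k < \<delta>"
  proof
    assume "((1::real)/4)^k < \<delta>"
    then have "k0 \<le> k" unfolding k0_def by (rule Least_le)
    then show False using kk by simp
  qed
  then show ?thesis using k0 kk by (intro exI[of _ k]) auto
qed

lemma s2pos: "0 < sqrt (2::real)" by simp
lemma s3pos: "0 < sqrt (3::real)" by simp
lemma s2_bounds: "1 < sqrt (2::real)" "sqrt (2::real) < 3/2"
proof -
  show "1 < sqrt (2::real)" by (simp add: real_less_rsqrt)
  have "sqrt (2::real) < sqrt ((3/2)^2)" by (rule real_sqrt_less_mono) (simp add: power2_eq_square)
  then show "sqrt (2::real) < 3/2" by simp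
qed
lemma s3_bounds: "1 < sqrt (3::real)" "sqrt (3::real) < 2"
proof -
  show "1 < sqrt (3::real)" by (simp add: real_less_rsqrt)
  have "sqrt (3::real) < sqrt (2^2)" by (rule real_sqrt_less_mono) (simp add: power2_eq_square)
  then show "sqrt (3::real) < 2" by simp
qed


definition HC :: "real \<Rightarrow> real \<Rightarrow> real \<Rightarrow> real \<Rightarrow> real \<Rightarrow> bool" where
  "HC s1 s2 s3 s4 t \<longleftrightarrow> 0 \<le> s1 \<and> 0 \<le> s2 \<and> 0 \<le> s3 \<and> s3 \<le> sqrt 2 * (t - s4)
     \<and> s1 + s2 \<le> sqrt 3 * (t - s4) \<and> sqrt 3 * s1 \<le> s4 \<and> sqrt 3 * s2 + sqrt 2 * s3 \<le> t"

lemma lorentz_E: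
  "lorentz x (E 1) = - fst x $ 3"
  "lorentz x (E (Suc 0)) = - fst x $ 3"
  "lorentz x (E 2) = fst x $ 3 + sqrt 2 * (fst x $ 4 - snd x)"
  "lorentz x (E 3) = sqrt 3 / 2 * fst x $ 1 - fst x $ 4 / 2"
  "lorentz x (E 4) = - fst x $ 1"
  "lorentz x (E 5) = sqrt 2 / 2 * (fst x $ 1 + fst x $ 2 - sqrt 3 * (snd x - fst x $ 4))"
  "lorentz x (E 6) = - fst x $ 2"
  "lorentz x (E 7) = sqrt 3 / 2 * fst x $ 2 + sqrt 2 / 2 * fst x $ 3 - snd x / 2"
  by (simp_all add: lorentz_expand E_simps algebra_simps)

lemma HC_of:
  assumes "\<forall>i\<in>{1..7}. lorentz x (E i) \<le> 0"
  shows "HC (fst x $ 1) (fst x $ 2) (fst x $ 3) (fst x $ 4) (snd x)"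
proof -
  have h: "lorentz x (E i) \<le> 0" if "i \<in> {1,2,3,4,5,6,7}" for i
    using assms that by auto
  have h5: "sqrt 2 / 2 * (fst x $ 1 + fst x $ 2 - sqrt 3 * (snd x - fst x $ 4)) \<le> 0"
    using h[of 5] by (simp add: lorentz_E)
  then have h5': "fst x $ 1 + fst x $ 2 - sqrt 3 * (snd x - fst x $ 4) \<le> 0"
    by (simp add: mult_le_0_iff)
  show ?thesis unfolding HC_def
    using h[of 1] h[of 2] h[of 3] h[of 4] h5' h[of 6] h[of 7]
    by (simp add: lorentz_E algebra_simps)
qed

lemma key_s:
  assumes "HC s1 s2 s3 s4 t"
  shows "(t - s4) * t / 10 \<le> t^2 - (s1^2 + s2^2 + s3^2 + s4^2)"
proof -
  let ?d = "t - s4"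
  have A: "0 \<le> s1" "0 \<le> s2" "0 \<le> s3" "s3 \<le> sqrt 2 * ?d" "s1 + s2 \<le> sqrt 3 * ?d"
      "sqrt 3 * s1 \<le> s4" "sqrt 3 * s2 + sqrt 2 * s3 \<le> t"
    using assms by (auto simp: HC_def)
  have c4: "sqrt 2 * s3 \<le> 2 * ?d"
    using mult_left_mono[OF A(4), of "sqrt 2"] by (simp add: mult.assoc[symmetric])
  have c5: "sqrt 3 * s1 + sqrt 3 * s2 \<le> 3 * ?d"
    using mult_left_mono[OF A(5), of "sqrt 3"] by (simp add: mult.assoc[symmetric] distrib_left)
  have "?d*t/10 \<le> 2*?d*t - ?d^2 - (sqrt 3 * s1)^2/3 - (sqrt 3 * s2)^2/3 - (sqrt 2 * s3)^2/2"
    by (rule key_cert) (use A c4 c5 in auto)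
  then show ?thesis by (simp add: power_mult_distrib power2_eq_square algebra_simps)
qed


lemma norm4: "(norm (y::real^4))^2 = (y$1)^2 + (y$2)^2 + (y$3)^2 + (y$4)^2"
  by (subst power2_norm_eq_inner) (simp add: inner_vec_def sum_4 power2_eq_square)

lemma polytope_HC: "x \<in> polytope {1..7} E \<Longrightarrow> HC (fst x $ 1) (fst x $ 2) (fst x $ 3) (fst x $ 4) (snd x)"
  by (rule HC_of) (simp add: polytope_def)

lemma hyp_eq: "x \<in> hyp \<Longrightarrow> 0 < snd x \<and> (snd x)^2 - ((fst x $ 1)^2 + (fst x $ 2)^2 + (fst x $ 3)^2 + (fst x $ 4)^2) = 1"
  by (simp add: hyp_def lorentz_expand power2_eq_square algebra_simps)

lemma klein_pw:
  assumes "y \<in> klein ` (polytope {1..7} E \<inter> hyp)"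
  shows "\<exists>k. y \<in> Bx k \<and> (1 - (norm y)^2) powr (-5/2) \<le> 32^(k+3)"
proof -
  obtain x where x: "x \<in> polytope {1..7} E" "x \<in> hyp" "y = klein x" using assms by auto
  define s1 where "s1 = fst x $ 1"
  define s2 where "s2 = fst x $ 2"
  define s3 where "s3 = fst x $ 3"
  define s4 where "s4 = fst x $ 4"
  define t where "t = snd x"
  have H: "HC s1 s2 s3 s4 t" using polytope_HC[OF x(1)] by (simp add: s1_def s2_def s3_def s4_def t_def)
  have tp: "0 < t" and hy: "t^2 - (s1^2 + s2^2 + s3^2 + s4^2) = 1"
    using hyp_eq[OF x(2)] by (simp_all add: s1_def s2_def s3_def s4_def t_def)
  have yc: "y$1 = s1/t" "y$2 = s2/t" "y$3 = s3/t" "y$4 = s4/t"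
    using x(3) by (simp_all add: klein_def s1_def s2_def s3_def s4_def t_def divide_inverse mult.commute)
  have ny0: "(norm y)^2 = (s1^2 + s2^2 + s3^2 + s4^2) / t^2"
    by (simp add: norm4 yc power_divide add_divide_distrib)
  have ny1: "1 - (s1^2 + s2^2 + s3^2 + s4^2) / t^2 = (t^2 - (s1^2 + s2^2 + s3^2 + s4^2)) / t^2"
    using tp by (simp add: field_simps)
  have ny: "1 - (norm y)^2 = 1 / t^2"
    using ny0 ny1 hy by simp
  have A: "0 \<le> s1" "0 \<le> s2" "0 \<le> s3" "s3 \<le> sqrt 2 * (t - s4)" "s1 + s2 \<le> sqrt 3 * (t - s4)"
      "sqrt 3 * s1 \<le> s4" "sqrt 3 * s2 + sqrt 2 * s3 \<le> t"
    using H by (auto simp: HC_def)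
  have key: "(t - s4) * t / 10 \<le> 1" using key_s[OF H] hy by simp
  define \<delta> where "\<delta> = (t - s4) / t"
  have d0: "0 \<le> t - s4" using A(3,4) s2pos by (smt (verit) mult_nonneg_nonneg mult_nonpos_nonneg zero_le_mult_iff)
  have dpos: "0 < t - s4"
  proof (rule ccontr)
    assume "\<not> 0 < t - s4"
    then have "t - s4 = 0" using d0 by simp
    then have "s1 = 0" "s2 = 0" "s3 = 0" "s4 = t" using A by auto
    then show False using hy by simp
  qed
  have s4nn: "0 \<le> s4" using A(1,6) s3pos by (smt (verit) mult_nonneg_nonneg)
  have \<delta>pos: "0 < \<delta>" and \<delta>le: "\<delta> \<le> 1" using dpos tp s4nn by (simp_all add: \<delta>_def field_simps)
  obtain k where k: "(1/4)^(k+1) < \<delta>" "\<delta> \<le> (1/4)^k" using choose_k[OF \<delta>pos \<delta>le] by auto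
  have y4: "y$4 = 1 - \<delta>" using tp by (simp add: yc \<delta>_def field_simps)
  have b1: "s1 / t \<le> 2 * \<delta>"
  proof -
    have "s1 \<le> sqrt 3 * (t - s4)" using A by linarith
    also have "\<dots> \<le> 2 * (t - s4)" using s3_bounds dpos by (intro mult_right_mono) auto
    finally show ?thesis using tp by (simp add: \<delta>_def field_simps)
  qed
  have b2: "s2 / t \<le> 2 * \<delta>"
  proof -
    have "s2 \<le> sqrt 3 * (t - s4)" using A by linarith
    also have "\<dots> \<le> 2 * (t - s4)" using s3_bounds dpos by (intro mult_right_mono) auto
    finally show ?thesis using tp by (simp add: \<delta>_def field_simps)
  qed
  have b3: "s3 / t \<le> 2 * \<delta>"
  proof -
    have "s3 \<le> sqrt 2 * (t - s4)" using A by linarith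
    also have "\<dots> \<le> 2 * (t - s4)" using s2_bounds dpos by (intro mult_right_mono) auto
    finally show ?thesis using tp by (simp add: \<delta>_def field_simps)
  qed
  have inB: "y \<in> Bx k"
    unfolding mem_Bx using A(1,2,3) tp b1 b2 b3 k \<delta>pos y4
    by (simp add: yc)
  have lb0: "\<delta> / 10 \<le> 1 / t^2"
  proof -
    have k2: "(t - s4) * t \<le> 10" using key by simp
    have "\<delta> / 10 = ((t - s4) * t) / (10 * t^2)" using tp by (simp add: \<delta>_def field_simps power2_eq_square)
    also have "\<dots> \<le> 10 / (10 * t^2)" using k2 tp by (intro divide_right_mono) auto
    also have "\<dots> = 1 / t^2" by simp
    finally show ?thesis .
  qed
  have lb: "\<delta> / 10 \<le> 1 - (norm y)^2"
    using lb0 ny by simp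
  have lb2: "(1/4)^(k+3) \<le> 1 - (norm y)^2"
  proof -
    have "((1::real)/4)^(k+3) = (1/4)^(k+1) / 16" by (simp add: power_add eval_nat_numeral)
    also have "\<dots> \<le> \<delta> / 10" proof -
      have "0 \<le> ((1::real)/4)^(k+1)" by simp
      then show ?thesis using k(1) by linarith
    qed
    finally show ?thesis using lb by linarith
  qed
  have "(1 - (norm y)^2) powr (-5/2) \<le> ((1/4)^(k+3)) powr (-5/2)"
    by (rule powr_mono2') (use lb2 in auto)
  also have "\<dots> = 32^(k+3)" by (rule pow4_powr)
  finally show ?thesis using inB by blast
qed

lemma finite_volume: "hyp_volume (polytope {1..7} E) < \<infinity>"
  unfolding hyp_volume_def by (rule finite_vol_crit) (rule klein_pw)


lemma s2b: "1.41 < sqrt (2::real)" "sqrt (2::real) < 1.42"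
proof -
  show "1.41 < sqrt (2::real)" by (rule real_less_rsqrt) (simp add: power2_eq_square)
  have "sqrt (2::real) < sqrt (1.42^2)" by (rule real_sqrt_less_mono) (simp add: power2_eq_square)
  then show "sqrt (2::real) < 1.42" by simp
qed
lemma s3b: "1.73 < sqrt (3::real)" "sqrt (3::real) < 1.74"
proof -
  show "1.73 < sqrt (3::real)" by (rule real_less_rsqrt) (simp add: power2_eq_square)
  have "sqrt (3::real) < sqrt (1.74^2)" by (rule real_sqrt_less_mono) (simp add: power2_eq_square)
  then show "sqrt (3::real) < 1.74" by simp
qed

definition kp :: "real \<Rightarrow> real \<Rightarrow> real \<Rightarrow> real \<Rightarrow> lor" where
  "kp a b c d = (let r = sqrt (1 - (a^2 + b^2 + c^2 + d^2)) in V4 (a/r) (b/r) (c/r) (d/r) (1/r))"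

lemma V4r_hyp:
  assumes r: "0 < r" and r2: "r^2 = 1 - (a^2 + b^2 + c^2 + d^2)"
  shows "V4 (a/r) (b/r) (c/r) (d/r) (1/r) \<in> hyp"
proof -
  have "lorentz (V4 (a/r) (b/r) (c/r) (d/r) (1/r)) (V4 (a/r) (b/r) (c/r) (d/r) (1/r))
      = (a^2 + b^2 + c^2 + d^2 - 1) / r^2"
    using r by (simp add: lorentz_V4 field_simps power2_eq_square)
  also have "\<dots> = -1" using r2 r by (simp add: field_simps)
  finally show ?thesis using r by (simp add: hyp_def)
qed

lemma V4r_lor:
  assumes r: "0 < r"
  shows "lorentz (V4 (a/r) (b/r) (c/r) (d/r) (1/r)) e = lorentz (V4 a b c d 1) e / r"
  using r by (simp add: lorentz_expand field_simps)

lemma kp_hyp: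
  assumes "a^2 + b^2 + c^2 + d^2 < 1"
  shows "kp a b c d \<in> hyp"
  unfolding kp_def Let_def by (rule V4r_hyp) (use assms in simp_all)

lemma kp_sign:
  assumes "a^2 + b^2 + c^2 + d^2 < 1"
  shows "lorentz (kp a b c d) e < 0 \<longleftrightarrow> lorentz (V4 a b c d 1) e < 0"
    "0 < lorentz (kp a b c d) e \<longleftrightarrow> 0 < lorentz (V4 a b c d 1) e"
proof -
  have r: "0 < sqrt (1 - (a^2 + b^2 + c^2 + d^2))" using assms by simp
  show "lorentz (kp a b c d) e < 0 \<longleftrightarrow> lorentz (V4 a b c d 1) e < 0"
    unfolding kp_def Let_def V4r_lor[OF r] using r by (simp add: divide_less_0_iff)
  show "0 < lorentz (kp a b c d) e \<longleftrightarrow> 0 < lorentz (V4 a b c d 1) e"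
    unfolding kp_def Let_def V4r_lor[OF r] using r by (simp add: zero_less_divide_iff)
qed

lemma E5_neg: "lorentz x (E 5) < 0 \<longleftrightarrow> fst x $ 1 + fst x $ 2 - sqrt 3 * (snd x - fst x $ 4) < 0"
  by (simp add: lorentz_E mult_less_0_iff)
lemma E5_pos: "0 < lorentz x (E 5) \<longleftrightarrow> 0 < fst x $ 1 + fst x $ 2 - sqrt 3 * (snd x - fst x $ 4)"
  by (simp add: lorentz_E zero_less_mult_iff)

lemma lorentz_E_no5:
  "lorentz x (E 1) = - fst x $ 3"
  "lorentz x (E 2) = fst x $ 3 + sqrt 2 * (fst x $ 4 - snd x)"
  "lorentz x (E 3) = sqrt 3 / 2 * fst x $ 1 - fst x $ 4 / 2"
  "lorentz x (E 4) = - fst x $ 1"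
  "lorentz x (E 6) = - fst x $ 2"
  "lorentz x (E 7) = sqrt 3 / 2 * fst x $ 2 + sqrt 2 / 2 * fst x $ 3 - snd x / 2"
  by (simp_all add: lorentz_E)

lemma pt0: "lorentz (kp (15/100) (15/100) (15/100) (6/10)) (E 1) < 0 \<and> lorentz (kp (15/100) (15/100) (15/100) (6/10)) (E 2) < 0 \<and> lorentz (kp (15/100) (15/100) (15/100) (6/10)) (E 3) < 0 \<and> lorentz (kp (15/100) (15/100) (15/100) (6/10)) (E 4) < 0 \<and> lorentz (kp (15/100) (15/100) (15/100) (6/10)) (E 5) < 0 \<and> lorentz (kp (15/100) (15/100) (15/100) (6/10)) (E 6) < 0 \<and> lorentz (kp (15/100) (15/100) (15/100) (6/10)) (E 7) < 0"
proof -
  have p: "(15/100)^2 + (15/100)^2 + (15/100)^2 + (6/10)^2 < (1::real)" by (simp add: power2_eq_square)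
  show ?thesis by (simp only: kp_sign[OF p], simp only: E5_neg E5_pos lorentz_E_no5 V4_comp) (insert s2b s3b, simp)
qed

lemma pt1: "0 < lorentz (kp (15/100) (15/100) (-7/10) (6/10)) (E 1) \<and> lorentz (kp (15/100) (15/100) (-7/10) (6/10)) (E 2) < 0 \<and> lorentz (kp (15/100) (15/100) (-7/10) (6/10)) (E 3) < 0 \<and> lorentz (kp (15/100) (15/100) (-7/10) (6/10)) (E 4) < 0 \<and> lorentz (kp (15/100) (15/100) (-7/10) (6/10)) (E 5) < 0 \<and> lorentz (kp (15/100) (15/100) (-7/10) (6/10)) (E 6) < 0 \<and> lorentz (kp (15/100) (15/100) (-7/10) (6/10)) (E 7) < 0"
proof -
  have p: "(15/100)^2 + (15/100)^2 + (-7/10)^2 + (6/10)^2 < (1::real)" by (simp add: power2_eq_square)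
  show ?thesis by (simp only: kp_sign[OF p], simp only: E5_neg E5_pos lorentz_E_no5 V4_comp) (insert s2b s3b, simp)
qed

lemma pt2: "lorentz (kp (1/10) (1/10) (4/10) (8/10)) (E 1) < 0 \<and> 0 < lorentz (kp (1/10) (1/10) (4/10) (8/10)) (E 2) \<and> lorentz (kp (1/10) (1/10) (4/10) (8/10)) (E 3) < 0 \<and> lorentz (kp (1/10) (1/10) (4/10) (8/10)) (E 4) < 0 \<and> lorentz (kp (1/10) (1/10) (4/10) (8/10)) (E 5) < 0 \<and> lorentz (kp (1/10) (1/10) (4/10) (8/10)) (E 6) < 0 \<and> lorentz (kp (1/10) (1/10) (4/10) (8/10)) (E 7) < 0"
proof -
  have p: "(1/10)^2 + (1/10)^2 + (4/10)^2 + (8/10)^2 < (1::real)" by (simp add: power2_eq_square)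
  show ?thesis by (simp only: kp_sign[OF p], simp only: E5_neg E5_pos lorentz_E_no5 V4_comp) (insert s2b s3b, simp)
qed

lemma pt3: "lorentz (kp (2/10) (2/10) (2/10) (-9/10)) (E 1) < 0 \<and> lorentz (kp (2/10) (2/10) (2/10) (-9/10)) (E 2) < 0 \<and> 0 < lorentz (kp (2/10) (2/10) (2/10) (-9/10)) (E 3) \<and> lorentz (kp (2/10) (2/10) (2/10) (-9/10)) (E 4) < 0 \<and> lorentz (kp (2/10) (2/10) (2/10) (-9/10)) (E 5) < 0 \<and> lorentz (kp (2/10) (2/10) (2/10) (-9/10)) (E 6) < 0 \<and> lorentz (kp (2/10) (2/10) (2/10) (-9/10)) (E 7) < 0"
proof -
  have p: "(2/10)^2 + (2/10)^2 + (2/10)^2 + (-9/10)^2 < (1::real)" by (simp add: power2_eq_square)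
  show ?thesis by (simp only: kp_sign[OF p], simp only: E5_neg E5_pos lorentz_E_no5 V4_comp) (insert s2b s3b, simp)
qed

lemma pt4: "lorentz (kp (-9/10) (2/10) (2/10) (-2/10)) (E 1) < 0 \<and> lorentz (kp (-9/10) (2/10) (2/10) (-2/10)) (E 2) < 0 \<and> lorentz (kp (-9/10) (2/10) (2/10) (-2/10)) (E 3) < 0 \<and> 0 < lorentz (kp (-9/10) (2/10) (2/10) (-2/10)) (E 4) \<and> lorentz (kp (-9/10) (2/10) (2/10) (-2/10)) (E 5) < 0 \<and> lorentz (kp (-9/10) (2/10) (2/10) (-2/10)) (E 6) < 0 \<and> lorentz (kp (-9/10) (2/10) (2/10) (-2/10)) (E 7) < 0"
proof -
  have p: "(-9/10)^2 + (2/10)^2 + (2/10)^2 + (-2/10)^2 < (1::real)" by (simp add: power2_eq_square)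
  show ?thesis by (simp only: kp_sign[OF p], simp only: E5_neg E5_pos lorentz_E_no5 V4_comp) (insert s2b s3b, simp)
qed

lemma pt5: "lorentz (kp (25/100) (3/10) (15/100) (8/10)) (E 1) < 0 \<and> lorentz (kp (25/100) (3/10) (15/100) (8/10)) (E 2) < 0 \<and> lorentz (kp (25/100) (3/10) (15/100) (8/10)) (E 3) < 0 \<and> lorentz (kp (25/100) (3/10) (15/100) (8/10)) (E 4) < 0 \<and> 0 < lorentz (kp (25/100) (3/10) (15/100) (8/10)) (E 5) \<and> lorentz (kp (25/100) (3/10) (15/100) (8/10)) (E 6) < 0 \<and> lorentz (kp (25/100) (3/10) (15/100) (8/10)) (E 7) < 0"
proof -
  have p: "(25/100)^2 + (3/10)^2 + (15/100)^2 + (8/10)^2 < (1::real)" by (simp add: power2_eq_square)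
  show ?thesis by (simp only: kp_sign[OF p], simp only: E5_neg E5_pos lorentz_E_no5 V4_comp) (insert s2b s3b, simp)
qed

lemma pt6: "lorentz (kp (2/10) (-6/10) (2/10) (7/10)) (E 1) < 0 \<and> lorentz (kp (2/10) (-6/10) (2/10) (7/10)) (E 2) < 0 \<and> lorentz (kp (2/10) (-6/10) (2/10) (7/10)) (E 3) < 0 \<and> lorentz (kp (2/10) (-6/10) (2/10) (7/10)) (E 4) < 0 \<and> lorentz (kp (2/10) (-6/10) (2/10) (7/10)) (E 5) < 0 \<and> 0 < lorentz (kp (2/10) (-6/10) (2/10) (7/10)) (E 6) \<and> lorentz (kp (2/10) (-6/10) (2/10) (7/10)) (E 7) < 0"
proof -
  have p: "(2/10)^2 + (-6/10)^2 + (2/10)^2 + (7/10)^2 < (1::real)" by (simp add: power2_eq_square)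
  show ?thesis by (simp only: kp_sign[OF p], simp only: E5_neg E5_pos lorentz_E_no5 V4_comp) (insert s2b s3b, simp)
qed

lemma pt7: "lorentz (kp (15/100) (4/10) (45/100) (55/100)) (E 1) < 0 \<and> lorentz (kp (15/100) (4/10) (45/100) (55/100)) (E 2) < 0 \<and> lorentz (kp (15/100) (4/10) (45/100) (55/100)) (E 3) < 0 \<and> lorentz (kp (15/100) (4/10) (45/100) (55/100)) (E 4) < 0 \<and> lorentz (kp (15/100) (4/10) (45/100) (55/100)) (E 5) < 0 \<and> lorentz (kp (15/100) (4/10) (45/100) (55/100)) (E 6) < 0 \<and> 0 < lorentz (kp (15/100) (4/10) (45/100) (55/100)) (E 7)"
proof -
  have p: "(15/100)^2 + (4/10)^2 + (45/100)^2 + (55/100)^2 < (1::real)" by (simp add: power2_eq_square)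
  show ?thesis by (simp only: kp_sign[OF p], simp only: E5_neg E5_pos lorentz_E_no5 V4_comp) (insert s2b s3b, simp)
qed


lemma ball17: "(\<forall>i\<in>{1..7::nat}. P i) \<longleftrightarrow> P 1 \<and> P 2 \<and> P 3 \<and> P 4 \<and> P 5 \<and> P 6 \<and> P 7"
  unfolding Ball_def mem17 by blast

lemma ball17m: "(\<forall>j\<in>{1..7::nat} - {i}. P j) \<longleftrightarrow> (\<forall>j\<in>{1..7}. j \<noteq> i \<longrightarrow> P j)"
  by blast

lemma hypk: "a^2 + b^2 + c^2 + d^2 < 1 \<Longrightarrow> kp a b c d \<in> hyp" by (rule kp_hyp)

lemma cox: "coxeter_polytope_with_diagram {1..7} D_m E"
  unfolding coxeter_polytope_with_diagram_def
proof (intro conjI)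
  show "finite {1..7::nat}" by simp
  show "\<forall>i\<in>{1..7}. lorentz (E i) (E i) = 1" using E_norm by blast
  show "\<forall>i\<in>{1..7}. \<forall>j\<in>{1..7}. i \<noteq> j \<longrightarrow> lorentz (E i) (E j) = gram_entry (D_m i j)"
    using E_gram by blast
  show "\<exists>x\<in>hyp. \<forall>i\<in>{1..7}. lorentz x (E i) < 0"
  proof (rule bexI[of _ "kp (15/100) (15/100) (15/100) (6/10)"])
    show "kp (15/100) (15/100) (15/100) (6/10) \<in> hyp" by (rule hypk) (simp add: power2_eq_square)
    show "\<forall>i\<in>{1..7}. lorentz (kp (15/100) (15/100) (15/100) (6/10)) (E i) < 0" using pt0 unfolding ball17 by simp
  qed
  show "\<forall>i\<in>{1..7}. \<exists>x\<in>hyp. 0 < lorentz x (E i) \<and> (\<forall>j\<in>{1..7} - {i}. lorentz x (E j) < 0)"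
  proof
    fix i :: nat assume "i \<in> {1..7}"
    then consider "i = 1" | "i = 2" | "i = 3" | "i = 4" | "i = 5" | "i = 6" | "i = 7" unfolding mem17 by blast
    then show "\<exists>x\<in>hyp. 0 < lorentz x (E i) \<and> (\<forall>j\<in>{1..7} - {i}. lorentz x (E j) < 0)"
    proof cases
      case 1
      have h: "kp (15/100) (15/100) (-7/10) (6/10) \<in> hyp" by (rule hypk) (simp add: power2_eq_square)
      show ?thesis using pt1 h 1 unfolding ball17m ball17 by (intro bexI[of _ "kp (15/100) (15/100) (-7/10) (6/10)"]) simp_all
    next
      case 2
      have h: "kp (1/10) (1/10) (4/10) (8/10) \<in> hyp" by (rule hypk) (simp add: power2_eq_square)
      show ?thesis using pt2 h 2 unfolding ball17m ball17 by (intro bexI[of _ "kp (1/10) (1/10) (4/10) (8/10)"]) simp_all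
    next
      case 3
      have h: "kp (2/10) (2/10) (2/10) (-9/10) \<in> hyp" by (rule hypk) (simp add: power2_eq_square)
      show ?thesis using pt3 h 3 unfolding ball17m ball17 by (intro bexI[of _ "kp (2/10) (2/10) (2/10) (-9/10)"]) simp_all
    next
      case 4
      have h: "kp (-9/10) (2/10) (2/10) (-2/10) \<in> hyp" by (rule hypk) (simp add: power2_eq_square)
      show ?thesis using pt4 h 4 unfolding ball17m ball17 by (intro bexI[of _ "kp (-9/10) (2/10) (2/10) (-2/10)"]) simp_all
    next
      case 5
      have h: "kp (25/100) (3/10) (15/100) (8/10) \<in> hyp" by (rule hypk) (simp add: power2_eq_square)
      show ?thesis using pt5 h 5 unfolding ball17m ball17 by (intro bexI[of _ "kp (25/100) (3/10) (15/100) (8/10)"]) simp_all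
    next
      case 6
      have h: "kp (2/10) (-6/10) (2/10) (7/10) \<in> hyp" by (rule hypk) (simp add: power2_eq_square)
      show ?thesis using pt6 h 6 unfolding ball17m ball17 by (intro bexI[of _ "kp (2/10) (-6/10) (2/10) (7/10)"]) simp_all
    next
      case 7
      have h: "kp (15/100) (4/10) (45/100) (55/100) \<in> hyp" by (rule hypk) (simp add: power2_eq_square)
      show ?thesis using pt7 h 7 unfolding ball17m ball17 by (intro bexI[of _ "kp (15/100) (4/10) (45/100) (55/100)"]) simp_all
    qed
  qed
qed


definition Vv :: lor where "Vv = V4 0 0 0 1 1"

lemma Vv_E: "lorentz Vv (E 1) = 0" "lorentz Vv (E (Suc 0)) = 0" "lorentz Vv (E 2) = 0" "lorentz Vv (E 3) = -1/2"
  "lorentz Vv (E 4) = 0" "lorentz Vv (E 5) = 0" "lorentz Vv (E 6) = 0" "lorentz Vv (E 7) = -1/2"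
  by (simp_all add: Vv_def lorentz_E)

lemma ideal_Vv: "ideal_vertex {1..7} E Vv"
  unfolding ideal_vertex_def
proof (intro conjI allI impI)
  show "lorentz Vv Vv = 0" by (simp add: Vv_def lorentz_V4)
  show "snd Vv = 1" by (simp add: Vv_def)
  show "\<forall>i\<in>{1..7}. lorentz Vv (E i) \<le> 0" unfolding ball17 using Vv_E by simp
  fix w :: lor
  assume H: "\<forall>i\<in>{1..7}. lorentz Vv (E i) = 0 \<longrightarrow> lorentz w (E i) = 0"
  have "lorentz w (E 1) = 0" "lorentz w (E 2) = 0" "lorentz w (E 4) = 0" "lorentz w (E 6) = 0"
    using H Vv_E unfolding ball17 by simp_all
  then have "fst w $ 3 = 0" "fst w $ 1 = 0" "fst w $ 2 = 0" "fst w $ 4 = snd w"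
    by (simp_all add: lorentz_E)
  then have "w = snd w *\<^sub>R Vv" by (simp add: lor_eq_iff Vv_def)
  then show "\<exists>c. w = c *\<^sub>R Vv" by blast
qed

lemma ideal_unique:
  assumes "ideal_vertex {1..7} E v"
  shows "v = Vv"
proof -
  have a: "lorentz v v = 0" "snd v = 1" "\<forall>i\<in>{1..7}. lorentz v (E i) \<le> 0"
    using assms by (auto simp: ideal_vertex_def)
  define s1 where "s1 = fst v $ 1"
  define s2 where "s2 = fst v $ 2"
  define s3 where "s3 = fst v $ 3"
  define s4 where "s4 = fst v $ 4"
  have H: "HC s1 s2 s3 s4 1" using HC_of[OF a(3)] a(2) by (simp add: s1_def s2_def s3_def s4_def)
  have nn: "1^2 - (s1^2 + s2^2 + s3^2 + s4^2) = 0"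
    using a(1,2) by (simp add: lorentz_expand s1_def s2_def s3_def s4_def power2_eq_square)
  have k: "(1 - s4) * 1 / 10 \<le> 0" using key_s[OF H] nn by simp
  have A: "0 \<le> s1" "0 \<le> s2" "0 \<le> s3" "s3 \<le> sqrt 2 * (1 - s4)" "s1 + s2 \<le> sqrt 3 * (1 - s4)"
    using H by (auto simp: HC_def)
  have d0: "0 \<le> 1 - s4"
  proof -
    have "0 \<le> sqrt 2 * (1 - s4)" using A(3,4) by linarith
    then show ?thesis by (simp add: zero_le_mult_iff)
  qed
  have "s4 = 1" using k d0 by simp
  then have "s1 = 0" "s2 = 0" "s3 = 0" using A by auto
  then show ?thesis using `s4 = 1` a(2) by (simp add: lor_eq_iff Vv_def s1_def s2_def s3_def s4_def)
qed

lemma vertex_facets: "{i \<in> {1..7}. lorentz Vv (E i) = 0} = {1, 2, 4, 5, 6}"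
proof (rule set_eqI)
  fix i :: nat
  show "i \<in> {i \<in> {1..7}. lorentz Vv (E i) = 0} \<longleftrightarrow> i \<in> {1, 2, 4, 5, 6}"
  proof
    assume "i \<in> {i \<in> {1..7}. lorentz Vv (E i) = 0}"
    then have "i = 1 \<or> i = 2 \<or> i = 3 \<or> i = 4 \<or> i = 5 \<or> i = 6 \<or> i = 7" "lorentz Vv (E i) = 0"
      unfolding mem17 by auto
    then show "i \<in> {1, 2, 4, 5, 6}" by (elim disjE) (simp_all add: Vv_E)
  next
    assume "i \<in> {1, 2, 4, 5, 6}"
    then have "i = 1 \<or> i = 2 \<or> i = 4 \<or> i = 5 \<or> i = 6" by simp
    then show "i \<in> {i \<in> {1..7}. lorentz Vv (E i) = 0}" by (elim disjE) (simp_all add: Vv_E)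
  qed
qed


lemma dih0: "lorentz u w = 0 \<Longrightarrow> \<exists>k::nat. k > 0 \<and> dihedral u w = pi / real (2 * k)"
  by (rule exI[of _ 1]) (simp add: dihedral_def arccos_0)

lemma dih4: "lorentz u w = - sqrt 2 / 2 \<Longrightarrow> \<exists>k::nat. k > 0 \<and> dihedral u w = pi / real (2 * k)"
proof (rule exI[of _ 2])
  assume "lorentz u w = - sqrt 2 / 2"
  then have "dihedral u w = arccos (cos (pi / 4))" by (simp add: dihedral_def cos_45)
  also have "\<dots> = pi / 4" by (rule arccos_cos) auto
  finally show "(2::nat) > 0 \<and> dihedral u w = pi / real (2 * 2)" by simp
qed

lemma dih6: "lorentz u w = - sqrt 3 / 2 \<Longrightarrow> \<exists>k::nat. k > 0 \<and> dihedral u w = pi / real (2 * k)"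
proof (rule exI[of _ 3])
  assume "lorentz u w = - sqrt 3 / 2"
  then have "dihedral u w = arccos (cos (pi / 6))" by (simp add: dihedral_def cos_30)
  also have "\<dots> = pi / 6" by (rule arccos_cos) auto
  finally show "(3::nat) > 0 \<and> dihedral u w = pi / real (2 * 3)" by simp
qed

lemma facet12: "facet {1..7} E 1 \<inter> facet {1..7} E 2 = {}"
proof (rule ccontr)
  assume "facet {1..7} E 1 \<inter> facet {1..7} E 2 \<noteq> {}"
  then obtain x where x: "x \<in> hyp" "lorentz x (E 1) = 0" "lorentz x (E 2) = 0"
    by (auto simp: facet_def polytope_def)
  then have "fst x $ 3 = 0" "fst x $ 4 = snd x" by (simp_all add: lorentz_E)
  then show False using hyp_eq[OF x(1)]
    by (smt (verit) zero_le_power2)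
qed

lemma facet21: "facet {1..7} E 2 \<inter> facet {1..7} E 1 = {}"
  using facet12 by blast

lemma dp13: "\<exists>k::nat. k > 0 \<and> dihedral (E 1) (E 3) = pi / real (2 * k)"
  by (rule dih0) (simp add: E_simps lorentz_V4 field_simps)
lemma dp14: "\<exists>k::nat. k > 0 \<and> dihedral (E 1) (E 4) = pi / real (2 * k)"
  by (rule dih0) (simp add: E_simps lorentz_V4 field_simps)
lemma dp15: "\<exists>k::nat. k > 0 \<and> dihedral (E 1) (E 5) = pi / real (2 * k)"
  by (rule dih0) (simp add: E_simps lorentz_V4 field_simps)
lemma dp16: "\<exists>k::nat. k > 0 \<and> dihedral (E 1) (E 6) = pi / real (2 * k)"
  by (rule dih0) (simp add: E_simps lorentz_V4 field_simps)
lemma dp17: "\<exists>k::nat. k > 0 \<and> dihedral (E 1) (E 7) = pi / real (2 * k)"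
  by (rule dih4) (simp add: E_simps lorentz_V4 field_simps)
lemma dp23: "\<exists>k::nat. k > 0 \<and> dihedral (E 2) (E 3) = pi / real (2 * k)"
  by (rule dih4) (simp add: E_simps lorentz_V4 field_simps)
lemma dp24: "\<exists>k::nat. k > 0 \<and> dihedral (E 2) (E 4) = pi / real (2 * k)"
  by (rule dih0) (simp add: E_simps lorentz_V4 field_simps)
lemma dp25: "\<exists>k::nat. k > 0 \<and> dihedral (E 2) (E 5) = pi / real (2 * k)"
  by (rule dih0) (simp add: E_simps lorentz_V4 field_simps)
lemma dp26: "\<exists>k::nat. k > 0 \<and> dihedral (E 2) (E 6) = pi / real (2 * k)"
  by (rule dih0) (simp add: E_simps lorentz_V4 field_simps)
lemma dp27: "\<exists>k::nat. k > 0 \<and> dihedral (E 2) (E 7) = pi / real (2 * k)"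
  by (rule dih0) (simp add: E_simps lorentz_V4 field_simps)
lemma dp31: "\<exists>k::nat. k > 0 \<and> dihedral (E 3) (E 1) = pi / real (2 * k)"
  by (rule dih0) (simp add: E_simps lorentz_V4 field_simps)
lemma dp32: "\<exists>k::nat. k > 0 \<and> dihedral (E 3) (E 2) = pi / real (2 * k)"
  by (rule dih4) (simp add: E_simps lorentz_V4 field_simps)
lemma dp34: "\<exists>k::nat. k > 0 \<and> dihedral (E 3) (E 4) = pi / real (2 * k)"
  by (rule dih6) (simp add: E_simps lorentz_V4 field_simps)
lemma dp35: "\<exists>k::nat. k > 0 \<and> dihedral (E 3) (E 5) = pi / real (2 * k)"
  by (rule dih0) (simp add: E_simps lorentz_V4 field_simps)
lemma dp36: "\<exists>k::nat. k > 0 \<and> dihedral (E 3) (E 6) = pi / real (2 * k)"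
  by (rule dih0) (simp add: E_simps lorentz_V4 field_simps)
lemma dp37: "\<exists>k::nat. k > 0 \<and> dihedral (E 3) (E 7) = pi / real (2 * k)"
  by (rule dih0) (simp add: E_simps lorentz_V4 field_simps)
lemma dp41: "\<exists>k::nat. k > 0 \<and> dihedral (E 4) (E 1) = pi / real (2 * k)"
  by (rule dih0) (simp add: E_simps lorentz_V4 field_simps)
lemma dp42: "\<exists>k::nat. k > 0 \<and> dihedral (E 4) (E 2) = pi / real (2 * k)"
  by (rule dih0) (simp add: E_simps lorentz_V4 field_simps)
lemma dp43: "\<exists>k::nat. k > 0 \<and> dihedral (E 4) (E 3) = pi / real (2 * k)"
  by (rule dih6) (simp add: E_simps lorentz_V4 field_simps)
lemma dp45: "\<exists>k::nat. k > 0 \<and> dihedral (E 4) (E 5) = pi / real (2 * k)"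
  by (rule dih4) (simp add: E_simps lorentz_V4 field_simps)
lemma dp46: "\<exists>k::nat. k > 0 \<and> dihedral (E 4) (E 6) = pi / real (2 * k)"
  by (rule dih0) (simp add: E_simps lorentz_V4 field_simps)
lemma dp47: "\<exists>k::nat. k > 0 \<and> dihedral (E 4) (E 7) = pi / real (2 * k)"
  by (rule dih0) (simp add: E_simps lorentz_V4 field_simps)
lemma dp51: "\<exists>k::nat. k > 0 \<and> dihedral (E 5) (E 1) = pi / real (2 * k)"
  by (rule dih0) (simp add: E_simps lorentz_V4 field_simps)
lemma dp52: "\<exists>k::nat. k > 0 \<and> dihedral (E 5) (E 2) = pi / real (2 * k)"
  by (rule dih0) (simp add: E_simps lorentz_V4 field_simps)
lemma dp53: "\<exists>k::nat. k > 0 \<and> dihedral (E 5) (E 3) = pi / real (2 * k)"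
  by (rule dih0) (simp add: E_simps lorentz_V4 field_simps)
lemma dp54: "\<exists>k::nat. k > 0 \<and> dihedral (E 5) (E 4) = pi / real (2 * k)"
  by (rule dih4) (simp add: E_simps lorentz_V4 field_simps)
lemma dp56: "\<exists>k::nat. k > 0 \<and> dihedral (E 5) (E 6) = pi / real (2 * k)"
  by (rule dih4) (simp add: E_simps lorentz_V4 field_simps)
lemma dp57: "\<exists>k::nat. k > 0 \<and> dihedral (E 5) (E 7) = pi / real (2 * k)"
  by (rule dih0) (simp add: E_simps lorentz_V4 field_simps)
lemma dp61: "\<exists>k::nat. k > 0 \<and> dihedral (E 6) (E 1) = pi / real (2 * k)"
  by (rule dih0) (simp add: E_simps lorentz_V4 field_simps)
lemma dp62: "\<exists>k::nat. k > 0 \<and> dihedral (E 6) (E 2) = pi / real (2 * k)"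
  by (rule dih0) (simp add: E_simps lorentz_V4 field_simps)
lemma dp63: "\<exists>k::nat. k > 0 \<and> dihedral (E 6) (E 3) = pi / real (2 * k)"
  by (rule dih0) (simp add: E_simps lorentz_V4 field_simps)
lemma dp64: "\<exists>k::nat. k > 0 \<and> dihedral (E 6) (E 4) = pi / real (2 * k)"
  by (rule dih0) (simp add: E_simps lorentz_V4 field_simps)
lemma dp65: "\<exists>k::nat. k > 0 \<and> dihedral (E 6) (E 5) = pi / real (2 * k)"
  by (rule dih4) (simp add: E_simps lorentz_V4 field_simps)
lemma dp67: "\<exists>k::nat. k > 0 \<and> dihedral (E 6) (E 7) = pi / real (2 * k)"
  by (rule dih6) (simp add: E_simps lorentz_V4 field_simps)
lemma dp71: "\<exists>k::nat. k > 0 \<and> dihedral (E 7) (E 1) = pi / real (2 * k)"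
  by (rule dih4) (simp add: E_simps lorentz_V4 field_simps)
lemma dp72: "\<exists>k::nat. k > 0 \<and> dihedral (E 7) (E 2) = pi / real (2 * k)"
  by (rule dih0) (simp add: E_simps lorentz_V4 field_simps)
lemma dp73: "\<exists>k::nat. k > 0 \<and> dihedral (E 7) (E 3) = pi / real (2 * k)"
  by (rule dih0) (simp add: E_simps lorentz_V4 field_simps)
lemma dp74: "\<exists>k::nat. k > 0 \<and> dihedral (E 7) (E 4) = pi / real (2 * k)"
  by (rule dih0) (simp add: E_simps lorentz_V4 field_simps)
lemma dp75: "\<exists>k::nat. k > 0 \<and> dihedral (E 7) (E 5) = pi / real (2 * k)"
  by (rule dih0) (simp add: E_simps lorentz_V4 field_simps)
lemma dp76: "\<exists>k::nat. k > 0 \<and> dihedral (E 7) (E 6) = pi / real (2 * k)"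
  by (rule dih6) (simp add: E_simps lorentz_V4 field_simps)

lemma dih_all: "\<forall>i\<in>{1..7}. \<forall>j\<in>{1..7}.
        hyp_bounded (facet {1..7} E i) \<and> \<not> hyp_bounded (facet {1..7} E j) \<and>
        facet {1..7} E i \<inter> facet {1..7} E j \<noteq> {} \<longrightarrow>
        (\<exists>k::nat. k > 0 \<and> dihedral (E i) (E j) = pi / real (2 * k))"
  unfolding ball17 by (simp only: dp13 dp14 dp15 dp16 dp17 dp23 dp24 dp25 dp26 dp27 dp31 dp32 dp34 dp35 dp36 dp37 dp41 dp42 dp43 dp45 dp46 dp47 dp51 dp52 dp53 dp54 dp56 dp57 dp61 dp62 dp63 dp64 dp65 dp67 dp71 dp72 dp73 dp74 dp75 dp76 facet12 facet21 simp_thms) blast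


definition nq :: "real \<times> real \<times> real \<Rightarrow> real" where
  "nq p = (fst p)^2 + (fst (snd p))^2 + (snd (snd p))^2"

definition Tq :: "real \<Rightarrow> real \<times> real \<times> real \<Rightarrow> real" where
  "Tq c p = ((1 + nq p) / c + c) / 2"

definition phi :: "real \<Rightarrow> real \<times> real \<times> real \<Rightarrow> lor" where
  "phi c p = V4 (fst p) (fst (snd p)) (snd (snd p)) (Tq c p - c) (Tq c p)"

lemma nq_nonneg: "0 \<le> nq p" by (simp add: nq_def)

lemma Tq_pos: "0 < c \<Longrightarrow> 0 < Tq c p"
  using nq_nonneg[of p] by (simp add: Tq_def add_pos_nonneg)

lemma phi_hyp: assumes c: "0 < c" shows "phi c p \<in> hyp"
proof -
  have "2 * c * Tq c p = 1 + nq p + c^2" using c by (simp add: Tq_def field_simps power2_eq_square)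
  then have "lorentz (phi c p) (phi c p) = -1"
    by (simp add: phi_def lorentz_V4 nq_def power2_eq_square algebra_simps)
  then show ?thesis using Tq_pos[OF c] by (simp add: hyp_def phi_def)
qed

lemma phi_horo: assumes c: "0 < c" shows "phi c p \<in> horosphere Vv c"
  using phi_hyp[OF c] by (simp add: horosphere_def phi_def Vv_def lorentz_V4)

lemma horo_phi:
  assumes c: "0 < c" and x: "x \<in> horosphere Vv c"
  shows "x = phi c (fst x $ 1, fst x $ 2, fst x $ 3)"
proof -
  have xh: "x \<in> hyp" and xv: "lorentz x Vv = - c" using x by (auto simp: horosphere_def)
  have t: "snd x = fst x $ 4 + c" using xv by (simp add: lorentz_expand Vv_def)
  have h: "(snd x)^2 - ((fst x $ 1)^2 + (fst x $ 2)^2 + (fst x $ 3)^2 + (fst x $ 4)^2) = 1"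
    using hyp_eq[OF xh] by simp
  have "Tq c (fst x $ 1, fst x $ 2, fst x $ 3) = snd x"
  proof -
    have "1 + ((fst x $ 1)^2 + (fst x $ 2)^2 + (fst x $ 3)^2) = 2 * c * fst x $ 4 + c^2"
      using h t by (simp add: power2_eq_square algebra_simps)
    then show ?thesis using c t by (simp add: Tq_def nq_def field_simps power2_eq_square)
  qed
  then show ?thesis using t by (simp add: lor_eq_iff phi_def)
qed

lemma phi_image: assumes c: "0 < c" shows "range (phi c) = horosphere Vv c"
proof
  show "range (phi c) \<subseteq> horosphere Vv c" using phi_horo[OF c] by blast
  show "horosphere Vv c \<subseteq> range (phi c)"
  proof
    fix x assume "x \<in> horosphere Vv c"
    then have "x = phi c (fst x $ 1, fst x $ 2, fst x $ 3)" by (rule horo_phi[OF c])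
    then show "x \<in> range (phi c)" by blast
  qed
qed

lemma V4_diff: "V4 a b c d t - V4 a' b' c' d' t' = V4 (a - a') (b - b') (c - c') (d - d') (t - t')"
  by (simp add: lor_eq_iff)

lemma phi_isom: "lorentz (phi c p - phi c q) (phi c p - phi c q) = (dist p q)^2"
proof -
  obtain a b z where p: "p = (a, b, z)" by (cases p) auto
  obtain a' b' z' where q: "q = (a', b', z')" by (cases q) auto
  have "lorentz (phi c p - phi c q) (phi c p - phi c q) = (a - a')^2 + (b - b')^2 + (z - z')^2"
    by (simp add: p q phi_def V4_diff lorentz_V4 power2_eq_square algebra_simps)
  also have "\<dots> = (dist p q)^2"
    by (simp add: p q dist_Pair_Pair dist_real_def)
  finally show ?thesis .
qed


lemma c_bounds:
  fixes c :: real
  assumes c: "0 < c" "c \<le> 1/3"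
  shows "3 * c \<le> (1 / c - c) / 2" "5 * c \<le> (1 / c + c) / 2"
proof -
  have cc: "c * c \<le> 1/9" using mult_mono[OF c(2) c(2)] c by simp
  have "7 * c \<le> 1 / c" using c cc by (simp add: le_divide_eq)
  then show "3 * c \<le> (1 / c - c) / 2" by simp
  have "9 * c \<le> 1 / c" using c cc by (simp add: le_divide_eq)
  then show "5 * c \<le> (1 / c + c) / 2" by simp
qed

lemma prism_in:
  assumes c: "0 < c" "c \<le> 1/3" and p: "p \<in> tri_prism (sqrt 3 * c) (sqrt 2 * c)"
  shows "phi c p \<in> polytope {1..7} E"
proof -
  obtain a b z where pp: "p = (a, b, z)" by (cases p) auto
  have A: "0 \<le> a" "0 \<le> b" "a + b \<le> sqrt 3 * c" "0 \<le> z" "z \<le> sqrt 2 * c"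
    using p by (auto simp: tri_prism_def pp)
  define T where "T = Tq c p"
  have T: "(1 / c + c) / 2 \<le> T"
  proof -
    have "1 / c \<le> (1 + nq p) / c" using c nq_nonneg[of p] by (intro divide_right_mono) auto
    then have "(1 / c + c) / 2 \<le> ((1 + nq p) / c + c) / 2" by (rule divide_right_mono[OF add_right_mono]) simp
    then show ?thesis by (simp only: T_def Tq_def)
  qed
  have cb: "3 * c \<le> (1 / c - c) / 2" "5 * c \<le> (1 / c + c) / 2" using c_bounds[OF c] by auto
  have a3: "sqrt 3 * a \<le> 3 * c"
  proof -
    have "sqrt 3 * a \<le> sqrt 3 * (sqrt 3 * c)" using A by (intro mult_left_mono) auto
    then show ?thesis by (simp add: mult.assoc[symmetric])
  qed
  have b3: "sqrt 3 * b \<le> 3 * c"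
  proof -
    have "sqrt 3 * b \<le> sqrt 3 * (sqrt 3 * c)" using A by (intro mult_left_mono) auto
    then show ?thesis by (simp add: mult.assoc[symmetric])
  qed
  have z2: "sqrt 2 * z \<le> 2 * c"
  proof -
    have "sqrt 2 * z \<le> sqrt 2 * (sqrt 2 * c)" using A by (intro mult_left_mono) auto
    then show ?thesis by (simp add: mult.assoc[symmetric])
  qed
  have ph: "phi c p = V4 a b z (T - c) T" by (simp add: phi_def T_def pp)
  have e5: "a + b - sqrt 3 * (T - (T - c)) \<le> 0" using A by simp
  have "\<forall>i\<in>{1..7}. lorentz (phi c p) (E i) \<le> 0"
    unfolding ball17 ph lorentz_E V4_comp
    using A a3 b3 z2 T cb e5 s2pos by (simp add: mult_le_0_iff)
  then show ?thesis using phi_hyp[OF c(1)] by (simp add: polytope_def)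
qed

lemma prism_out:
  assumes c: "0 < c" and x: "x \<in> polytope {1..7} E \<inter> horosphere Vv c"
  shows "(fst x $ 1, fst x $ 2, fst x $ 3) \<in> tri_prism (sqrt 3 * c) (sqrt 2 * c)"
proof -
  have H: "HC (fst x $ 1) (fst x $ 2) (fst x $ 3) (fst x $ 4) (snd x)" using x polytope_HC by blast
  have "lorentz x Vv = - c" using x by (simp add: horosphere_def)
  then have t: "snd x - fst x $ 4 = c" by (simp add: lorentz_expand Vv_def)
  show ?thesis using H t by (simp add: HC_def tri_prism_def)
qed

lemma prism_link:
  assumes c: "0 < c" "c \<le> 1/3"
  shows "is_right_prism_link (horosphere Vv c) (polytope {1..7} E \<inter> horosphere Vv c)"
  unfolding is_right_prism_link_def
proof (intro exI conjI allI)
  show "0 < sqrt 3 * c" "0 < sqrt 2 * c" using c by auto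
  show "phi c ` UNIV = horosphere Vv c" using phi_image[OF c(1)] by simp
  fix p q show "lorentz (phi c p - phi c q) (phi c p - phi c q) = (dist p q)^2" by (rule phi_isom)
next
  show "phi c ` tri_prism (sqrt 3 * c) (sqrt 2 * c) = polytope {1..7} E \<inter> horosphere Vv c"
  proof
    show "phi c ` tri_prism (sqrt 3 * c) (sqrt 2 * c) \<subseteq> polytope {1..7} E \<inter> horosphere Vv c"
      using prism_in[OF c] phi_horo[OF c(1)] by blast
    show "polytope {1..7} E \<inter> horosphere Vv c \<subseteq> phi c ` tri_prism (sqrt 3 * c) (sqrt 2 * c)"
    proof
      fix x assume x: "x \<in> polytope {1..7} E \<inter> horosphere Vv c"
      then have "x = phi c (fst x $ 1, fst x $ 2, fst x $ 3)" using horo_phi[OF c(1)] by blast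
      then show "x \<in> phi c ` tri_prism (sqrt 3 * c) (sqrt 2 * c)" using prism_out[OF c(1) x] by blast
    qed
  qed
qed

theorem proposition3p1:
  shows "\<exists>e. coxeter_polytope_with_diagram {1..7} D_m e \<and>
     hyp_volume (polytope {1..7} e) < \<infinity> \<and>
     (\<exists>!v. ideal_vertex {1..7} e v) \<and>
     (\<forall>i\<in>{1..7}. \<forall>j\<in>{1..7}.
        hyp_bounded (facet {1..7} e i) \<and> \<not> hyp_bounded (facet {1..7} e j) \<and>
        facet {1..7} e i \<inter> facet {1..7} e j \<noteq> {} \<longrightarrow>
        (\<exists>k::nat. k > 0 \<and> dihedral (e i) (e j) = pi / real (2 * k))) \<and>
     (\<forall>v. ideal_vertex {1..7} e v \<longrightarrow>
        {i \<in> {1..7}. lorentz v (e i) = 0} = {1, 2, 4, 5, 6} \<and>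
        (\<exists>c0>0. \<forall>c. 0 < c \<and> c \<le> c0 \<longrightarrow>
           is_right_prism_link (horosphere v c) (polytope {1..7} e \<inter> horosphere v c)))"
proof (rule exI[of _ E], intro conjI)
  show "coxeter_polytope_with_diagram {1..7} D_m E" by (rule cox)
  show "hyp_volume (polytope {1..7} E) < \<infinity>" by (rule finite_volume)
  show "\<exists>!v. ideal_vertex {1..7} E v"
    using ideal_Vv ideal_unique by blast
  show "\<forall>i\<in>{1..7}. \<forall>j\<in>{1..7}.
        hyp_bounded (facet {1..7} E i) \<and> \<not> hyp_bounded (facet {1..7} E j) \<and>
        facet {1..7} E i \<inter> facet {1..7} E j \<noteq> {} \<longrightarrow>
        (\<exists>k::nat. k > 0 \<and> dihedral (E i) (E j) = pi / real (2 * k))"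
    by (rule dih_all)
  show "\<forall>v. ideal_vertex {1..7} E v \<longrightarrow>
        {i \<in> {1..7}. lorentz v (E i) = 0} = {1, 2, 4, 5, 6} \<and>
        (\<exists>c0>0. \<forall>c. 0 < c \<and> c \<le> c0 \<longrightarrow>
           is_right_prism_link (horosphere v c) (polytope {1..7} E \<inter> horosphere v c))"
  proof (intro allI impI conjI)
    fix v assume "ideal_vertex {1..7} E v"
    then have v: "v = Vv" by (rule ideal_unique)
    show "{i \<in> {1..7}. lorentz v (E i) = 0} = {1, 2, 4, 5, 6}" using vertex_facets v by simp
    show "\<exists>c0>0. \<forall>c. 0 < c \<and> c \<le> c0 \<longrightarrow>
           is_right_prism_link (horosphere v c) (polytope {1..7} E \<inter> horosphere v c)"
      using prism_link v by (intro exI[of _ "1/3"]) auto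
  qed
qed

end
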